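(* Let $H$ be a bigraph. Then $H$ is a cocomparability bigraph if and only if $H^{++}$ is a strong cocomparability graph.
   Context: A bigraph is a bipartite graph with fixed colour classes $X,Y$. The Slash matrix is the $2\times2$ matrix with rows $(0,1)$ and $(1,0)$; a matrix contains it as a submatrix if there are rows $i<j$ and columns $k<l$ with entries $(i,k)=0$, $(i,l)=1$, $(j,k)=1$, $(j,l)=0$. A bigraph is a cocomparability bigraph if its biadjacency matrix (rows indexed by $X$, columns by $Y$) admits independent permutations of rows and of columns yielding a matrix not containing the Slash matrix as a submatrix. A reflexive graph (every vertex carries a loop) is a strong cocomparability graph if its adjacency matrix (1's on the diagonal) admits a simultaneous row-and-column permutation not containing the Slash matrix as a submatrix. For a bigraph $H$, $H^{++}$ is the reflexive graph obtained from $H$ by making each of the two colour classes a clique and adding a loop at every vertex. *)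

theory Defs
  imports Main
begin

text \<open>A bigraph H with colour classes X and Y is modelled as (X, Y, E) with
  X :: 'a set, Y :: 'b set finite and edge set E \<subseteq> X \<times> Y.
  The biadjacency matrix has rows indexed by X and columns by Y, entry 1 at (x,y) iff (x,y) \<in> E.
  A permutation of the rows is an enumeration r : X \<rightarrow> {0..<card X} (bijection);
  row x is placed at position r x.\<close>

definition slash_free_bi ::
  "'a set \<Rightarrow> 'b set \<Rightarrow> ('a \<times> 'b) set \<Rightarrow> ('a \<Rightarrow> nat) \<Rightarrow> ('b \<Rightarrow> nat) \<Rightarrow> bool" where
  "slash_free_bi X Y E r c \<longleftrightarrow>
     \<not> (\<exists>i\<in>X. \<exists>j\<in>X. \<exists>k\<in>Y. \<exists>l\<in>Y. r i < r j \<and> c k < c l \<and>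
          (i, k) \<notin> E \<and> (i, l) \<in> E \<and> (j, k) \<in> E \<and> (j, l) \<notin> E)"

definition cocomparability_bigraph :: "'a set \<Rightarrow> 'b set \<Rightarrow> ('a \<times> 'b) set \<Rightarrow> bool" where
  "cocomparability_bigraph X Y E \<longleftrightarrow>
     (\<exists>r c. bij_betw r X {0..<card X} \<and> bij_betw c Y {0..<card Y} \<and> slash_free_bi X Y E r c)"

text \<open>A reflexive graph on vertex set V with adjacency relation A (symmetric, A v v for all v).
  Its adjacency matrix has 1's on the diagonal; a simultaneous permutation is an enumeration
  p : V \<rightarrow> {0..<card V}.\<close>

definition slash_free_sym :: "'v set \<Rightarrow> ('v \<Rightarrow> 'v \<Rightarrow> bool) \<Rightarrow> ('v \<Rightarrow> nat) \<Rightarrow> bool" where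
  "slash_free_sym V A p \<longleftrightarrow>
     \<not> (\<exists>i\<in>V. \<exists>j\<in>V. \<exists>k\<in>V. \<exists>l\<in>V. p i < p j \<and> p k < p l \<and>
          \<not> A i k \<and> A i l \<and> A j k \<and> \<not> A j l)"

definition strong_cocomparability_graph :: "'v set \<Rightarrow> ('v \<Rightarrow> 'v \<Rightarrow> bool) \<Rightarrow> bool" where
  "strong_cocomparability_graph V A \<longleftrightarrow>
     (\<exists>p. bij_betw p V {0..<card V} \<and> slash_free_sym V A p)"

text \<open>H^{++}: vertex set X \<uplus> Y (as a sum type), both classes made cliques, loops everywhere.\<close>

definition plusplus_vertices :: "'a set \<Rightarrow> 'b set \<Rightarrow> ('a + 'b) set" where
  "plusplus_vertices X Y = Inl ` X \<union> Inr ` Y"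

fun plusplus_adj :: "('a \<times> 'b) set \<Rightarrow> ('a + 'b) \<Rightarrow> ('a + 'b) \<Rightarrow> bool" where
  "plusplus_adj E (Inl x) (Inl x') = True"
| "plusplus_adj E (Inr y) (Inr y') = True"
| "plusplus_adj E (Inl x) (Inr y) = ((x, y) \<in> E)"
| "plusplus_adj E (Inr y) (Inl x) = ((x, y) \<in> E)"

end

theory Submission
  imports Defs
begin

lemma compress:
  fixes f :: "'x \<Rightarrow> nat"
  assumes fin: "finite S" and inj: "inj_on f S"
  shows "\<exists>g. bij_betw g S {0..<card S} \<and> (\<forall>x\<in>S. \<forall>y\<in>S. g x < g y \<longleftrightarrow> f x < f y)"
proof -
  define g where "g x = card {z\<in>S. f z < f x}" for x
  have mono: "g x < g y" if "x \<in> S" "y \<in> S" "f x < f y" for x y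
  proof -
    have "{z\<in>S. f z < f x} \<subset> {z\<in>S. f z < f y}" using that by auto
    then show ?thesis unfolding g_def using fin by (intro psubset_card_mono) auto
  qed
  have ord: "\<forall>x\<in>S. \<forall>y\<in>S. g x < g y \<longleftrightarrow> f x < f y"
  proof (intro ballI iffI)
    fix x y assume xy: "x \<in> S" "y \<in> S" "g x < g y"
    show "f x < f y"
    proof (rule ccontr)
      assume "\<not> f x < f y"
      then have "f y < f x \<or> f y = f x" by auto
      then show False
      proof
        assume "f y < f x" then show False using mono[of y x] xy by auto
      next
        assume "f y = f x" then have "x = y" using inj xy inj_onD by metis
        then show False using xy by simp
      qed
    qed
  next
    fix x y assume "x \<in> S" "y \<in> S" "f x < f y" then show "g x < g y" using mono by auto
  qed
  have injg: "inj_on g S"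
  proof (rule inj_onI)
    fix x y assume xy: "x \<in> S" "y \<in> S" "g x = g y"
    show "x = y"
    proof (rule ccontr)
      assume "x \<noteq> y"
      then have "f x \<noteq> f y" using inj xy inj_onD by metis
      then have "f x < f y \<or> f y < f x" by auto
      then show False using mono xy by fastforce
    qed
  qed
  have sub: "g ` S \<subseteq> {0..<card S}"
  proof
    fix v assume "v \<in> g ` S"
    then obtain x where x: "x \<in> S" "v = g x" by auto
    have "{z\<in>S. f z < f x} \<subset> S" using x by auto
    then have "card {z\<in>S. f z < f x} < card S" using fin by (intro psubset_card_mono) auto
    then show "v \<in> {0..<card S}" using x g_def by auto
  qed
  have "card (g ` S) = card {0..<card S}" using card_image[OF injg] by simp
  then have "g ` S = {0..<card S}" using card_subset_eq[OF _ sub] by simp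
  then have "bij_betw g S {0..<card S}" using injg by (simp add: bij_betw_def)
  then show ?thesis using ord by blast
qed

theorem theorem12:
  fixes X :: "'a set" and Y :: "'b set" and E :: "('a \<times> 'b) set"
  assumes "finite X" and "finite Y" and "E \<subseteq> X \<times> Y"
  shows "cocomparability_bigraph X Y E \<longleftrightarrow>
         strong_cocomparability_graph (plusplus_vertices X Y) (plusplus_adj E)"
proof
  assume "cocomparability_bigraph X Y E"
  then obtain r c where r: "bij_betw r X {0..<card X}" and c: "bij_betw c Y {0..<card Y}"
    and sf: "slash_free_bi X Y E r c" unfolding cocomparability_bigraph_def by blast
  define V where "V = plusplus_vertices X Y"
  define q where "q v = (case v of Inl x \<Rightarrow> r x | Inr y \<Rightarrow> card X + c y)" for v
  have rX: "\<And>x. x \<in> X \<Longrightarrow> r x < card X" using r bij_betwE by fastforce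
  have finV: "finite V" using assms unfolding V_def plusplus_vertices_def by auto
  have injq: "inj_on q V"
  proof (rule inj_onI)
    fix u v assume uv: "u \<in> V" "v \<in> V" "q u = q v"
    show "u = v"
      using uv rX bij_betw_imp_inj_on[OF r] bij_betw_imp_inj_on[OF c]
      unfolding V_def plusplus_vertices_def q_def
      by (auto dest: inj_onD) (fastforce dest: rX)+
  qed
  obtain p where p: "bij_betw p V {0..<card V}" and pq: "\<forall>x\<in>V. \<forall>y\<in>V. p x < p y \<longleftrightarrow> q x < q y"
    using compress[OF finV injq] by blast
  have "slash_free_sym V (plusplus_adj E) p"
    unfolding slash_free_sym_def
  proof
    assume "\<exists>i\<in>V. \<exists>j\<in>V. \<exists>k\<in>V. \<exists>l\<in>V. p i < p j \<and> p k < p l \<and>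
          \<not> plusplus_adj E i k \<and> plusplus_adj E i l \<and> plusplus_adj E j k \<and> \<not> plusplus_adj E j l"
    then obtain i j k l where ijkl: "i\<in>V" "j\<in>V" "k\<in>V" "l\<in>V" "q i < q j" "q k < q l"
      "\<not> plusplus_adj E i k" "plusplus_adj E i l" "plusplus_adj E j k" "\<not> plusplus_adj E j l"
      using pq by metis
    show False
      using ijkl sf rX unfolding V_def plusplus_vertices_def q_def slash_free_bi_def
      by (cases i; cases j; cases k; cases l) fastforce+
  qed
  then show "strong_cocomparability_graph (plusplus_vertices X Y) (plusplus_adj E)"
    unfolding strong_cocomparability_graph_def using p V_def by blast
next
  assume "strong_cocomparability_graph (plusplus_vertices X Y) (plusplus_adj E)"
  then obtain p where p: "bij_betw p (plusplus_vertices X Y) {0..<card (plusplus_vertices X Y)}"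
    and sf: "slash_free_sym (plusplus_vertices X Y) (plusplus_adj E) p"
    unfolding strong_cocomparability_graph_def by blast
  have injp: "inj_on p (plusplus_vertices X Y)" using p bij_betw_imp_inj_on by blast
  have i1: "inj_on (\<lambda>x. p (Inl x)) X"
    using injp unfolding plusplus_vertices_def inj_on_def by auto
  have i2: "inj_on (\<lambda>y. p (Inr y)) Y"
    using injp unfolding plusplus_vertices_def inj_on_def by auto
  obtain r where r: "bij_betw r X {0..<card X}" and ro: "\<forall>x\<in>X. \<forall>y\<in>X. r x < r y \<longleftrightarrow> p (Inl x) < p (Inl y)"
    using compress[OF assms(1) i1] by blast
  obtain c where c: "bij_betw c Y {0..<card Y}" and co: "\<forall>x\<in>Y. \<forall>y\<in>Y. c x < c y \<longleftrightarrow> p (Inr x) < p (Inr y)"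
    using compress[OF assms(2) i2] by blast
  have "slash_free_bi X Y E r c"
    unfolding slash_free_bi_def
  proof
    assume "\<exists>i\<in>X. \<exists>j\<in>X. \<exists>k\<in>Y. \<exists>l\<in>Y. r i < r j \<and> c k < c l \<and>
          (i, k) \<notin> E \<and> (i, l) \<in> E \<and> (j, k) \<in> E \<and> (j, l) \<notin> E"
    then obtain i j k l where h: "i\<in>X" "j\<in>X" "k\<in>Y" "l\<in>Y" "r i < r j" "c k < c l"
          "(i, k) \<notin> E" "(i, l) \<in> E" "(j, k) \<in> E" "(j, l) \<notin> E" by blast
    have "Inl i \<in> plusplus_vertices X Y" "Inl j \<in> plusplus_vertices X Y"
      "Inr k \<in> plusplus_vertices X Y" "Inr l \<in> plusplus_vertices X Y"
      using h unfolding plusplus_vertices_def by auto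
    moreover have "p (Inl i) < p (Inl j)" "p (Inr k) < p (Inr l)" using h ro co by auto
    ultimately show False using sf h unfolding slash_free_sym_def by fastforce
  qed
  then show "cocomparability_bigraph X Y E"
    unfolding cocomparability_bigraph_def using r c by blast
qed

end
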